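(* Let $(G,\sigma,p)$ be a $d$-dimensional tensegrity. An edge weight $\omega:E(G)\to\mathbb{R}$ is an optimal solution of the problem (D): minimize $\sum_{ij\in E(G)}\omega_{ij}\|p_i-p_j\|^2$ subject to $\sum_{ij\in E(G)}\omega_{ij}F_{ij}\succeq0$ and $\sigma(ij)\omega_{ij}\geq0$ for all $ij\in E(G)$, if and only if $\omega$ is a proper equilibrium stress of $(G,\sigma,p)$.
   Context: A $d$-dimensional tensegrity is a triple $(G,\sigma,p)$ with $G=(V,E)$ a finite simple graph, $\sigma:E\to\{-1,0,+1\}$, $p:V\to\mathbb{R}^d$. $F_{ij}=(\mathbf{e}_i-\mathbf{e}_j)(\mathbf{e}_i-\mathbf{e}_j)^\top$. An edge weight $\omega$ is an equilibrium stress if $\sum_{j\in N_G(i)}\omega_{ij}(p_i-p_j)=\mathbf{0}$ for every vertex $i$ ($N_G(i)$ the neighbours of $i$), and proper if $\sigma(ij)\omega_{ij}\geq0$ for all edges $ij$.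
   Formalization: $\omega$ is optimal for (D) if and only if it is a proper equilibrium stress that also satisfies $\sum_{ij\in E(G)}\omega_{ij}F_{ij}\succeq0$. The statement above fails without it. *)

theory Defs
  imports "HOL-Analysis.Analysis"
begin

definition simple_graph :: "'v set \<Rightarrow> 'v set set \<Rightarrow> bool" where
  "simple_graph V E \<longleftrightarrow> finite V \<and> E \<subseteq> {{i, j} | i j. i \<in> V \<and> j \<in> V \<and> i \<noteq> j}"

text \<open>A d-dimensional tensegrity (G, sigma, p); the dimension d is the index type 'd of p.\<close>
definition tensegrity :: "'v set \<Rightarrow> 'v set set \<Rightarrow> ('v set \<Rightarrow> real) \<Rightarrow> ('v \<Rightarrow> real ^ 'd) \<Rightarrow> bool" where
  "tensegrity V E \<sigma> p \<longleftrightarrow> simple_graph V E \<and> (\<forall>e\<in>E. \<sigma> e \<in> {-1, 0, 1})"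

definition ends :: "'v set \<Rightarrow> 'v \<times> 'v" where
  "ends e = (SOME (i, j). e = {i, j})"

text \<open>F_ij = (e_i - e_j)(e_i - e_j)^T as a V x V matrix (function of two vertices).\<close>
definition F :: "'v \<Rightarrow> 'v \<Rightarrow> 'v \<Rightarrow> 'v \<Rightarrow> real" where
  "F i j a b = ((if a = i then 1 else 0) - (if a = j then 1 else 0)) *
               ((if b = i then 1 else 0) - (if b = j then 1 else 0))"

definition F_edge :: "'v set \<Rightarrow> 'v \<Rightarrow> 'v \<Rightarrow> real" where
  "F_edge e = F (fst (ends e)) (snd (ends e))"

definition stress_matrix :: "'v set set \<Rightarrow> ('v set \<Rightarrow> real) \<Rightarrow> 'v \<Rightarrow> 'v \<Rightarrow> real" where
  "stress_matrix E \<omega> a b = (\<Sum>e\<in>E. \<omega> e * F_edge e a b)"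

definition psd :: "'v set \<Rightarrow> ('v \<Rightarrow> 'v \<Rightarrow> real) \<Rightarrow> bool" where
  "psd V M \<longleftrightarrow> (\<forall>x :: 'v \<Rightarrow> real. 0 \<le> (\<Sum>a\<in>V. \<Sum>b\<in>V. x a * M a b * x b))"

definition objective_D :: "'v set set \<Rightarrow> ('v \<Rightarrow> real ^ 'd) \<Rightarrow> ('v set \<Rightarrow> real) \<Rightarrow> real" where
  "objective_D E p \<omega> = (\<Sum>e\<in>E. \<omega> e * (norm (p (fst (ends e)) - p (snd (ends e))))\<^sup>2)"

definition proper :: "'v set set \<Rightarrow> ('v set \<Rightarrow> real) \<Rightarrow> ('v set \<Rightarrow> real) \<Rightarrow> bool" where
  "proper E \<sigma> \<omega> \<longleftrightarrow> (\<forall>e\<in>E. \<sigma> e * \<omega> e \<ge> 0)"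

definition feasible_D :: "'v set \<Rightarrow> 'v set set \<Rightarrow> ('v set \<Rightarrow> real) \<Rightarrow> ('v set \<Rightarrow> real) \<Rightarrow> bool" where
  "feasible_D V E \<sigma> \<omega> \<longleftrightarrow> psd V (stress_matrix E \<omega>) \<and> proper E \<sigma> \<omega>"

definition optimal_D :: "'v set \<Rightarrow> 'v set set \<Rightarrow> ('v set \<Rightarrow> real) \<Rightarrow> ('v \<Rightarrow> real ^ 'd) \<Rightarrow> ('v set \<Rightarrow> real) \<Rightarrow> bool" where
  "optimal_D V E \<sigma> p \<omega> \<longleftrightarrow> feasible_D V E \<sigma> \<omega> \<and>
     (\<forall>\<omega>'. feasible_D V E \<sigma> \<omega>' \<longrightarrow> objective_D E p \<omega> \<le> objective_D E p \<omega>')"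

definition nbrs :: "'v set \<Rightarrow> 'v set set \<Rightarrow> 'v \<Rightarrow> 'v set" where
  "nbrs V E i = {j \<in> V. {i, j} \<in> E}"

definition equilibrium_stress :: "'v set \<Rightarrow> 'v set set \<Rightarrow> ('v \<Rightarrow> real ^ 'd) \<Rightarrow> ('v set \<Rightarrow> real) \<Rightarrow> bool" where
  "equilibrium_stress V E p \<omega> \<longleftrightarrow>
     (\<forall>i\<in>V. (\<Sum>j\<in>nbrs V E i. \<omega> {i, j} *\<^sub>R (p i - p j)) = 0)"

end

theory Submission
  imports Defs
begin

lemma ends_prop:
  assumes "simple_graph V E" "e \<in> E"
  shows "e = {fst (ends e), snd (ends e)} \<and> fst (ends e) \<noteq> snd (ends e)
         \<and> fst (ends e) \<in> V \<and> snd (ends e) \<in> V"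
proof -
  obtain i j where ij: "e = {i, j}" "i \<in> V" "j \<in> V" "i \<noteq> j"
    using assms unfolding simple_graph_def by blast
  have "\<exists>x. (\<lambda>(i, j). e = {i, j}) x" using ij by auto
  then have "(\<lambda>(i, j). e = {i, j}) (ends e)" unfolding ends_def by (rule someI_ex)
  then have e: "e = {fst (ends e), snd (ends e)}" by (cases "ends e") auto
  then show ?thesis using ij by (metis doubleton_eq_iff insert_iff)
qed

lemma bil:
  assumes "simple_graph V E"
  shows "(\<Sum>u\<in>V. \<Sum>v\<in>V. x u * stress_matrix E \<omega> u v * y v)
    = (\<Sum>e\<in>E. \<omega> e * (x (fst (ends e)) - x (snd (ends e))) * (y (fst (ends e)) - y (snd (ends e))))"
proof -
  have fV: "finite V" using assms simple_graph_def by blast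
  have inner: "(\<Sum>u\<in>V. \<Sum>v\<in>V. x u * F_edge e u v * y v)
     = (x (fst (ends e)) - x (snd (ends e))) * (y (fst (ends e)) - y (snd (ends e)))"
    if "e \<in> E" for e
  proof -
    define a where "a = fst (ends e)"
    define b where "b = snd (ends e)"
    have ab: "a \<noteq> b" "a \<in> V" "b \<in> V" using ends_prop[OF assms that] a_def b_def by auto
    have s1: "(\<Sum>u\<in>V. x u * ((if u = a then 1 else 0) - (if u = b then 1 else 0))) = x a - x b"
    proof -
      have "(\<Sum>u\<in>V. x u * ((if u = a then 1 else 0) - (if u = b then 1 else 0)))
          = (\<Sum>u\<in>V. (if u = a then x u else 0) - (if u = b then x u else 0))"
        by (rule sum.cong) auto
      also have "\<dots> = x a - x b" using ab fV by (simp add: sum_subtractf)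
      finally show ?thesis .
    qed
    have s2: "(\<Sum>u\<in>V. ((if u = a then 1 else 0) - (if u = b then 1 else 0)) * y u) = y a - y b"
    proof -
      have "(\<Sum>u\<in>V. ((if u = a then 1 else 0) - (if u = b then 1 else 0)) * y u)
          = (\<Sum>u\<in>V. (if u = a then y u else 0) - (if u = b then y u else 0))"
        by (rule sum.cong) auto
      also have "\<dots> = y a - y b" using ab fV by (simp add: sum_subtractf)
      finally show ?thesis .
    qed
    have Fe: "F_edge e u v = ((if u = a then 1 else 0) - (if u = b then 1 else 0)) *
        ((if v = a then 1 else 0) - (if v = b then 1 else 0))" for u v
      unfolding F_edge_def F_def a_def b_def by simp
    have "(\<Sum>u\<in>V. \<Sum>v\<in>V. x u * F_edge e u v * y v)
        = (\<Sum>u\<in>V. (x u * ((if u = a then 1 else 0) - (if u = b then 1 else 0)))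
              * (\<Sum>v\<in>V. ((if v = a then 1 else 0) - (if v = b then 1 else 0)) * y v))"
      unfolding Fe sum_distrib_left by (intro sum.cong refl) (simp only: mult.assoc)
    also have "\<dots> = (x a - x b) * (y a - y b)"
      by (simp only: s2 sum_distrib_right[symmetric] s1)
    finally show ?thesis using a_def b_def by simp
  qed
  have "(\<Sum>u\<in>V. \<Sum>v\<in>V. x u * stress_matrix E \<omega> u v * y v)
      = (\<Sum>u\<in>V. \<Sum>v\<in>V. \<Sum>e\<in>E. \<omega> e * (x u * F_edge e u v * y v))"
    unfolding stress_matrix_def sum_distrib_left sum_distrib_right
    by (intro sum.cong refl) (simp only: mult_ac)
  also have "\<dots> = (\<Sum>u\<in>V. \<Sum>e\<in>E. \<Sum>v\<in>V. \<omega> e * (x u * F_edge e u v * y v))"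
    by (rule sum.cong[OF refl]) (rule sum.swap)
  also have "\<dots> = (\<Sum>e\<in>E. \<Sum>u\<in>V. \<Sum>v\<in>V. \<omega> e * (x u * F_edge e u v * y v))"
    by (rule sum.swap)
  also have "\<dots> = (\<Sum>e\<in>E. \<omega> e * (\<Sum>u\<in>V. \<Sum>v\<in>V. x u * F_edge e u v * y v))"
    by (simp only: sum_distrib_left)
  also have "\<dots> = (\<Sum>e\<in>E. \<omega> e * (x (fst (ends e)) - x (snd (ends e))) * (y (fst (ends e)) - y (snd (ends e))))"
  proof (rule sum.cong[OF refl])
    fix e assume "e \<in> E"
    then show "\<omega> e * (\<Sum>u\<in>V. \<Sum>v\<in>V. x u * F_edge e u v * y v) = \<omega> e * (x (fst (ends e)) - x (snd (ends e))) * (y (fst (ends e)) - y (snd (ends e)))"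
      using inner[OF \<open>e \<in> E\<close>] by simp
  qed
  finally show ?thesis .
qed

lemma row:
  fixes \<omega> :: "'v set \<Rightarrow> real" and y :: "'v \<Rightarrow> real"
  assumes G: "simple_graph V E" and iV: "i \<in> V"
  shows "(\<Sum>e\<in>E. \<omega> e * ((\<lambda>u. if u = i then 1 else 0) (fst (ends e)) - (\<lambda>u. if u = i then 1 else 0) (snd (ends e)))
              * (y (fst (ends e)) - y (snd (ends e))))
       = (\<Sum>j\<in>nbrs V E i. \<omega> {i, j} * (y i - y j))"
proof -
  have fV: "finite V" using G simple_graph_def by blast
  have EV: "E \<subseteq> Pow V" using G unfolding simple_graph_def by blast
  have fE: "finite E" using fV EV finite_subset by blast
  let ?f = "\<lambda>e. \<omega> e * ((\<lambda>u. if u = i then 1 else 0) (fst (ends e)) - (\<lambda>u. if u = i then (1::real) else 0) (snd (ends e)))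
              * (y (fst (ends e)) - y (snd (ends e)))"
  have "(\<Sum>e\<in>E. ?f e) = (\<Sum>e\<in>{e\<in>E. i \<in> e}. ?f e)"
  proof (rule sum.mono_neutral_right)
    show "finite E" by fact
    show "{e \<in> E. i \<in> e} \<subseteq> E" by blast
    show "\<forall>e\<in>E - {e \<in> E. i \<in> e}. ?f e = 0"
    proof
      fix e assume "e \<in> E - {e \<in> E. i \<in> e}"
      then have "e \<in> E" "i \<notin> e" by auto
      then show "?f e = 0" using ends_prop[OF G \<open>e \<in> E\<close>] by auto
    qed
  qed
  also have "{e\<in>E. i \<in> e} = (\<lambda>j. {i, j}) ` nbrs V E i"
  proof
    show "{e\<in>E. i \<in> e} \<subseteq> (\<lambda>j. {i, j}) ` nbrs V E i"
    proof
      fix e assume "e \<in> {e\<in>E. i \<in> e}"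
      then have e: "e \<in> E" "i \<in> e" by auto
      note ep = ends_prop[OF G e(1)]
      obtain c where c: "c \<in> V" "e = {i, c}"
      proof (cases "fst (ends e) = i")
        case True
        then show ?thesis using ep that by auto
      next
        case False
        then have "snd (ends e) = i" using ep e(2) by (metis insertE singletonD)
        then show ?thesis using ep that by (metis insert_commute)
      qed
      then have "c \<in> nbrs V E i" unfolding nbrs_def using e(1) by auto
      then show "e \<in> (\<lambda>j. {i, j}) ` nbrs V E i" using c by blast
    qed
    show "(\<lambda>j. {i, j}) ` nbrs V E i \<subseteq> {e\<in>E. i \<in> e}" unfolding nbrs_def by auto
  qed
  also have "(\<Sum>e\<in>(\<lambda>j. {i, j}) ` nbrs V E i. ?f e) = (\<Sum>j\<in>nbrs V E i. ?f {i, j})"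
  proof -
    have inj: "inj_on (\<lambda>j. {i, j}) (nbrs V E i)" by (auto simp: inj_on_def doubleton_eq_iff)
    show ?thesis by (simp only: sum.reindex[OF inj] o_def)
  qed
  also have "\<dots> = (\<Sum>j\<in>nbrs V E i. \<omega> {i, j} * (y i - y j))"
  proof (rule sum.cong[OF refl])
    fix j assume "j \<in> nbrs V E i"
    then have eE: "{i, j} \<in> E" unfolding nbrs_def by auto
    note ep = ends_prop[OF G eE]
    then have "(fst (ends {i,j}) = i \<and> snd (ends {i,j}) = j) \<or> (fst (ends {i,j}) = j \<and> snd (ends {i,j}) = i)"
      by (metis doubleton_eq_iff)
    then show "?f {i, j} = \<omega> {i, j} * (y i - y j)" using ep by auto
  qed
  finally show ?thesis .
qed

lemma quad_zero:
  fixes S T :: real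
  assumes "\<forall>t. 0 \<le> 2 * t * S + t^2 * T" "0 \<le> T"
  shows "S = 0"
proof -
  define t where "t = - S / (T + 1)"
  have h: "0 \<le> 2 * t * S + t^2 * T" using assms(1) by blast
  have ht: "t * (T + 1) = - S" unfolding t_def using assms(2) by simp
  have "(T+1)^2 * (2 * t * S + t^2 * T) = 2*S*(t*(T+1))*(T+1) + (t*(T+1))^2*T"
    by (simp add: algebra_simps power2_eq_square)
  also have "\<dots> = - (S^2 * (T + 2))" unfolding ht by (simp add: algebra_simps power2_eq_square)
  finally have "(T+1)^2 * (2 * t * S + t^2 * T) = - (S^2 * (T + 2))" .
  moreover have "0 \<le> (T+1)^2 * (2 * t * S + t^2 * T)" using h by simp
  ultimately have "S^2 * (T + 2) \<le> 0" by linarith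
  moreover have "0 < T + 2" using assms(2) by simp
  ultimately have "S^2 \<le> 0" by (simp add: mult_le_0_iff)
  then show ?thesis by simp
qed

lemma pt_gen:
  fixes w za zb da db t :: real
  shows "w * ((za + t * da) - (zb + t * db))^2 = w * (za - zb)^2 + 2 * t * (w * (da - db) * (za - zb)) + t^2 * (w * (da - db)^2)"
  by (simp add: power2_eq_square algebra_simps)

lemma vec_sum_comp:
  fixes c :: "'a \<Rightarrow> real" and q :: "'a \<Rightarrow> real ^ 'd"
  shows "(\<Sum>j\<in>A. c j *\<^sub>R q j) $ k = (\<Sum>j\<in>A. c j * q j $ k)"
  by (simp add: sum_component)

theorem proposition2p2:
  fixes V :: "'v set" and E :: "'v set set" and \<sigma> \<omega> :: "'v set \<Rightarrow> real"
    and p :: "'v \<Rightarrow> real ^ 'd"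
  assumes "tensegrity V E \<sigma> p"
  shows "optimal_D V E \<sigma> p \<omega> \<longleftrightarrow>
           (equilibrium_stress V E p \<omega> \<and> proper E \<sigma> \<omega> \<and> psd V (stress_matrix E \<omega>))"
proof -
  have G: "simple_graph V E" using assms tensegrity_def by blast
  have fV: "finite V" using G simple_graph_def by blast
  define Q where "Q = (\<lambda>(w::'v set \<Rightarrow> real) (z::'v \<Rightarrow> real).
      (\<Sum>e\<in>E. w e * (z (fst (ends e)) - z (snd (ends e)))^2))"
  define X where "X = (\<lambda>k v. p v $ k)"
  have bilQ: "(\<Sum>u\<in>V. \<Sum>v\<in>V. z u * stress_matrix E w u v * z v) = Q w z" for w z
    unfolding bil[OF G] Q_def by (simp add: power2_eq_square mult.assoc)
  have psdQ: "psd V (stress_matrix E w) \<Longrightarrow> 0 \<le> Q w z" for w z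
    unfolding psd_def bilQ[symmetric] by blast
  have nsq: "(norm (v::real^'d))^2 = (\<Sum>k\<in>UNIV. (v $ k)^2)" for v
    unfolding power2_norm_eq_inner inner_vec_def by (simp add: power2_eq_square)
  have obj: "objective_D E p w = (\<Sum>k\<in>UNIV. Q w (X k))" for w
  proof -
    have "objective_D E p w = (\<Sum>e\<in>E. \<Sum>k\<in>UNIV. w e * (X k (fst (ends e)) - X k (snd (ends e)))^2)"
      unfolding objective_D_def nsq X_def by (simp add: sum_distrib_left)
    also have "\<dots> = (\<Sum>k\<in>UNIV. Q w (X k))" unfolding Q_def by (rule sum.swap)
    finally show ?thesis .
  qed
  have rowS: "(\<Sum>v\<in>V. stress_matrix E w i v * z v) = (\<Sum>j\<in>nbrs V E i. w {i, j} * (z i - z j))"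
    if iV: "i \<in> V" for w z i
  proof -
    have "(\<Sum>u\<in>V. \<Sum>v\<in>V. (\<lambda>u. if u = i then 1 else 0) u * stress_matrix E w u v * z v)
        = (\<Sum>u\<in>V. if u = i then (\<Sum>v\<in>V. stress_matrix E w u v * z v) else 0)"
      by (rule sum.cong) auto
    also have "\<dots> = (\<Sum>v\<in>V. stress_matrix E w i v * z v)" using fV iV by simp
    finally have e1: "(\<Sum>u\<in>V. \<Sum>v\<in>V. (\<lambda>u. if u = i then 1 else 0) u * stress_matrix E w u v * z v)
        = (\<Sum>v\<in>V. stress_matrix E w i v * z v)" .
    show ?thesis using e1 bil[OF G] row[OF G iV] by simp
  qed
  have eqiff: "equilibrium_stress V E p w \<longleftrightarrow>
      (\<forall>i\<in>V. \<forall>k. (\<Sum>j\<in>nbrs V E i. w {i, j} * (X k i - X k j)) = 0)" for w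
    unfolding equilibrium_stress_def vec_eq_iff X_def vec_sum_comp by simp
  show ?thesis
  proof
    assume opt: "optimal_D V E \<sigma> p \<omega>"
    then have pr: "proper E \<sigma> \<omega>" and ps: "psd V (stress_matrix E \<omega>)"
      unfolding optimal_D_def feasible_D_def by auto
    have f0: "feasible_D V E \<sigma> (\<lambda>_. 0)"
      unfolding feasible_D_def psd_def proper_def stress_matrix_def by simp
    have "objective_D E p \<omega> \<le> objective_D E p (\<lambda>_. 0)"
      using opt f0 unfolding optimal_D_def by blast
    also have "\<dots> = 0" unfolding objective_D_def by simp
    finally have "(\<Sum>k\<in>UNIV. Q \<omega> (X k)) \<le> 0" unfolding obj .
    moreover have nn: "\<forall>k\<in>UNIV. 0 \<le> Q \<omega> (X k)" using psdQ[OF ps] by blast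
    moreover have "0 \<le> (\<Sum>k\<in>UNIV. Q \<omega> (X k))" by (rule sum_nonneg) (use nn in auto)
    ultimately have "(\<Sum>k\<in>UNIV. Q \<omega> (X k)) = 0" by linarith
    then have Q0: "Q \<omega> (X k) = 0" for k using sum_nonneg_eq_0_iff[of UNIV "\<lambda>k. Q \<omega> (X k)"] nn by simp
    have "(\<Sum>j\<in>nbrs V E i. \<omega> {i, j} * (X k i - X k j)) = 0" if iV: "i \<in> V" for i k
    proof -
      define z where "z = X k"
      define d where "d = (\<lambda>u. if u = i then (1::real) else 0)"
      define S where "S = (\<Sum>e\<in>E. \<omega> e * (d (fst (ends e)) - d (snd (ends e))) * (z (fst (ends e)) - z (snd (ends e))))"
      define T where "T = Q \<omega> d"
      have "0 \<le> 2 * t * S + t^2 * T" for t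
      proof -
        have pt: "\<omega> e * ((z (fst (ends e)) + t * d (fst (ends e))) - (z (snd (ends e)) + t * d (snd (ends e))))^2
           = \<omega> e * (z (fst (ends e)) - z (snd (ends e)))^2
             + 2 * t * (\<omega> e * (d (fst (ends e)) - d (snd (ends e))) * (z (fst (ends e)) - z (snd (ends e))))
             + t^2 * (\<omega> e * (d (fst (ends e)) - d (snd (ends e)))^2)" for e
          by (rule pt_gen)
        have "Q \<omega> (\<lambda>v. z v + t * d v) = Q \<omega> z + 2 * t * S + t^2 * T"
          unfolding Q_def S_def T_def by (simp only: pt sum.distrib sum_distrib_left)
        moreover have "0 \<le> Q \<omega> (\<lambda>v. z v + t * d v)" by (rule psdQ[OF ps])
        moreover have "Q \<omega> z = 0" using Q0 z_def by simp
        ultimately show ?thesis by simp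
      qed
      moreover have "0 \<le> T" unfolding T_def by (rule psdQ[OF ps])
      ultimately have "S = 0" using quad_zero by blast
      then show ?thesis using row[OF G iV, of \<omega> z] unfolding S_def d_def z_def by simp
    qed
    then have "equilibrium_stress V E p \<omega>" using eqiff by blast
    then show "equilibrium_stress V E p \<omega> \<and> proper E \<sigma> \<omega> \<and> psd V (stress_matrix E \<omega>)"
      using pr ps by blast
  next
    assume h: "equilibrium_stress V E p \<omega> \<and> proper E \<sigma> \<omega> \<and> psd V (stress_matrix E \<omega>)"
    then have fe: "feasible_D V E \<sigma> \<omega>" unfolding feasible_D_def by blast
    have "Q \<omega> (X k) = 0" for k
    proof -
      have "Q \<omega> (X k) = (\<Sum>u\<in>V. X k u * (\<Sum>v\<in>V. stress_matrix E \<omega> u v * X k v))"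
        unfolding bilQ[symmetric] by (simp add: sum_distrib_left mult.assoc)
      also have "\<dots> = (\<Sum>u\<in>V. X k u * 0)"
      proof (rule sum.cong[OF refl])
        fix u assume "u \<in> V"
        then show "X k u * (\<Sum>v\<in>V. stress_matrix E \<omega> u v * X k v) = X k u * 0"
          using rowS[OF \<open>u \<in> V\<close>] h eqiff by simp
      qed
      finally show ?thesis by simp
    qed
    then have o0: "objective_D E p \<omega> = 0" unfolding obj by simp
    have "objective_D E p \<omega> \<le> objective_D E p w'" if "feasible_D V E \<sigma> w'" for w'
    proof -
      have "psd V (stress_matrix E w')" using that feasible_D_def by blast
      then have "0 \<le> objective_D E p w'" unfolding obj by (intro sum_nonneg psdQ)
      then show ?thesis using o0 by simp
    qed
    then show "optimal_D V E \<sigma> p \<omega>" unfolding optimal_D_def using fe by blast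
  qed
qed

end
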